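(* Let $L>0$, $V\in C^1([0,L];\mathbb{R})$, $\varepsilon>0$, $q_\varepsilon\in L^\infty(0,L;\mathbb{R})$. For all $\alpha>0$, all $E\in\mathbb{R}$ and $\psi\in H^2(0,L)\cap H^1_0(0,L)$ with $\|\psi\|_{L^2}=1$ solving $-\varepsilon^2\psi''+(V+q_\varepsilon)\psi=E\psi$, and all points $x,y$ belonging to the same connected component of $\{z\in[0,L]: V(z)-E\ge\alpha^2\}$, we have $$\mathscr{E}^+(x)\le\exp\Big(\frac2\varepsilon\Big|\int_x^y\sqrt{V(s)-E}\,ds\Big|+\frac{\|V'\|_\infty}{\alpha^2}L+\frac{\|q_\varepsilon\|_\infty}{\alpha\varepsilon}L\Big)\mathscr{E}^+(y),$$ where $\mathscr{E}^+(x)=\varepsilon^2|\psi'(x)|^2+(V(x)-E)|\psi(x)|^2$. *)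

theory Defs
  imports "HOL-Analysis.Analysis"
begin

definition Linf_norm :: "real \<Rightarrow> (real \<Rightarrow> real) \<Rightarrow> real" where
  "Linf_norm L q = Inf {C. 0 \<le> C \<and> (AE x in lborel. x \<in> {0..L} \<longrightarrow> \<bar>q x\<bar> \<le> C)}"

definition sup_norm_on :: "real \<Rightarrow> (real \<Rightarrow> real) \<Rightarrow> real" where
  "sup_norm_on L f = Sup ((\<lambda>x. \<bar>f x\<bar>) ` {0..L})"

definition Eplus :: "real \<Rightarrow> (real \<Rightarrow> real) \<Rightarrow> real \<Rightarrow> (real \<Rightarrow> complex) \<Rightarrow> (real \<Rightarrow> complex) \<Rightarrow> real \<Rightarrow> real" where
  "Eplus \<epsilon> V E \<psi> \<psi>' x = \<epsilon>\<^sup>2 * (cmod (\<psi>' x))\<^sup>2 + (V x - E) * (cmod (\<psi> x))\<^sup>2"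

end

theory Submission
  imports Defs
begin

lemma cont_induct_mono:
  fixes G :: "real \<Rightarrow> real"
  assumes ab: "a \<le> b" and Gc: "continuous_on {a..b} G"
    and loc: "\<And>s \<eta>. s \<in> {a..<b} \<Longrightarrow> \<eta> > 0 \<Longrightarrow>
       \<exists>\<delta>>0. \<forall>t. s < t \<and> t < s + \<delta> \<and> t \<le> b \<longrightarrow> G s - \<eta> * (t - s) \<le> G t"
  shows "G a \<le> G b"
proof -
  have main: "G a - \<eta> * (b - a) \<le> G b" if eta: "\<eta> > 0" for \<eta>
  proof -
    define S where "S = {t \<in> {a..b}. G a - \<eta> * (t - a) \<le> G t}"
    have cl: "closed S" unfolding S_def
      by (intro continuous_on_closed_Collect_le continuous_intros Gc)
    have aS: "a \<in> S" using ab by (auto simp: S_def)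
    have bdd: "bdd_above S" by (auto simp: S_def bdd_above_def)
    define m where "m = Sup S"
    have mS: "m \<in> S" unfolding m_def using closed_contains_Sup[OF _ bdd cl] aS by auto
    have "m = b"
    proof (rule ccontr)
      assume "m \<noteq> b"
      with mS have mb: "m \<in> {a..<b}" by (auto simp: S_def)
      obtain \<delta> where d: "\<delta> > 0" "\<forall>t. m < t \<and> t < m + \<delta> \<and> t \<le> b \<longrightarrow> G m - \<eta> * (t - m) \<le> G t"
        using loc[OF mb eta] by blast
      define t where "t = min (m + \<delta>/2) b"
      have t1: "m < t" "t < m + \<delta>" "t \<le> b" using d mb by (auto simp: t_def)
      have "G m - \<eta> * (t - m) \<le> G t" using d t1 by blast
      moreover have "G a - \<eta> * (m - a) \<le> G m" using mS by (auto simp: S_def)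
      ultimately have "G a - \<eta> * (t - a) \<le> G t" by (simp add: algebra_simps)
      hence "t \<in> S" using t1 mb by (auto simp: S_def)
      hence "t \<le> m" unfolding m_def using bdd by (rule cSup_upper)
      with t1 show False by simp
    qed
    with mS show ?thesis by (auto simp: S_def)
  qed
  show ?thesis
  proof (rule ccontr)
    assume "\<not> G a \<le> G b"
    define \<eta> where "\<eta> = (G a - G b) / (b - a + 1)"
    have "\<eta> > 0" using \<open>\<not> G a \<le> G b\<close> ab by (simp add: \<eta>_def)
    have "\<eta> * (b - a) < G a - G b"
    proof -
      have "\<eta> * (b - a) < \<eta> * (b - a + 1)" using \<open>\<eta> > 0\<close> by simp
      also have "\<dots> = G a - G b" using ab by (simp add: \<eta>_def)
      finally show ?thesis .
    qed
    with main[OF \<open>\<eta> > 0\<close>] show False by simp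
  qed
qed

lemma local_mult:
  fixes F \<rho> :: "real \<Rightarrow> real"
  assumes eta: "\<eta> > 0" and rpos: "\<And>t. \<rho> t > 0"
    and rd: "(\<rho> has_real_derivative \<rho>') (at s within {s<..b})"
    and loc: "\<And>\<eta>'. \<eta>' > 0 \<Longrightarrow> \<exists>\<delta>>0. \<forall>t. s < t \<and> t < s + \<delta> \<and> t \<le> b \<longrightarrow> \<bar>F t - F s\<bar> \<le> (c + \<eta>') * (t - s)"
  shows "\<exists>\<delta>>0. \<forall>t. s < t \<and> t < s + \<delta> \<and> t \<le> b \<longrightarrow>
      (t - s) * (\<rho>' * F s - \<rho> s * c - \<eta>) \<le> \<rho> t * F t - \<rho> s * F s \<and>
      \<rho> t * F t - \<rho> s * F s \<le> (t - s) * (\<rho>' * F s + \<rho> s * c + \<eta>)"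
proof -
  define e where "e = \<eta> / (2 * \<rho> s)"
  have e: "e > 0" using eta rpos[of s] by (simp add: e_def)
  have re: "\<rho> s * e = \<eta> / 2" using rpos[of s] by (simp add: e_def)
  obtain \<delta>1 where d1: "\<delta>1 > 0" "\<forall>t. s < t \<and> t < s + \<delta>1 \<and> t \<le> b \<longrightarrow> \<bar>F t - F s\<bar> \<le> (c + e) * (t - s)"
    using loc[OF e] by blast
  let ?Fl = "at s within {s<..b}"
  have q: "((\<lambda>t. (\<rho> t - \<rho> s) / (t - s)) \<longlongrightarrow> \<rho>') ?Fl"
    using rd by (simp add: has_field_derivative_iff)
  have rc: "(\<rho> \<longlongrightarrow> \<rho> s) ?Fl"
    using DERIV_continuous[OF rd] by (simp add: continuous_within)
  have L1: "((\<lambda>t. (\<rho> t - \<rho> s) / (t - s) * F s - \<rho> t * (c + e)) \<longlongrightarrow> \<rho>' * F s - \<rho> s * (c + e)) ?Fl"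
    by (intro tendsto_intros q rc)
  have L2: "((\<lambda>t. (\<rho> t - \<rho> s) / (t - s) * F s + \<rho> t * (c + e)) \<longlongrightarrow> \<rho>' * F s + \<rho> s * (c + e)) ?Fl"
    by (intro tendsto_intros q rc)
  have ev1: "eventually (\<lambda>t. \<rho>' * F s - \<rho> s * c - \<eta> < (\<rho> t - \<rho> s) / (t - s) * F s - \<rho> t * (c + e)) ?Fl"
    by (rule order_tendstoD(1)[OF L1]) (use eta re in \<open>simp add: algebra_simps\<close>)
  have ev2: "eventually (\<lambda>t. (\<rho> t - \<rho> s) / (t - s) * F s + \<rho> t * (c + e) < \<rho>' * F s + \<rho> s * c + \<eta>) ?Fl"
    by (rule order_tendstoD(2)[OF L2]) (use eta re in \<open>simp add: algebra_simps\<close>)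
  obtain \<delta>2 where d2: "\<delta>2 > 0" "\<forall>t\<in>{s<..b}. t \<noteq> s \<and> dist t s < \<delta>2 \<longrightarrow>
      \<rho>' * F s - \<rho> s * c - \<eta> < (\<rho> t - \<rho> s) / (t - s) * F s - \<rho> t * (c + e) \<and>
      (\<rho> t - \<rho> s) / (t - s) * F s + \<rho> t * (c + e) < \<rho>' * F s + \<rho> s * c + \<eta>"
    using eventually_conj[OF ev1 ev2] unfolding eventually_at by blast
  show ?thesis
  proof (intro exI[of _ "min \<delta>1 \<delta>2"] conjI allI impI)
    show "min \<delta>1 \<delta>2 > 0" using d1 d2 by simp
    fix t assume t: "s < t \<and> t < s + min \<delta>1 \<delta>2 \<and> t \<le> b"
    have Fb: "\<bar>F t - F s\<bar> \<le> (c + e) * (t - s)" using d1 t by auto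
    have dt: "dist t s < \<delta>2" using t by (simp add: dist_real_def min_def split: if_splits)
    have B: "\<rho>' * F s - \<rho> s * c - \<eta> < (\<rho> t - \<rho> s) / (t - s) * F s - \<rho> t * (c + e)"
         "(\<rho> t - \<rho> s) / (t - s) * F s + \<rho> t * (c + e) < \<rho>' * F s + \<rho> s * c + \<eta>"
      using d2 t dt by auto
    have ts: "t - s > 0" using t by simp
    have id: "\<rho> t * F t - \<rho> s * F s = \<rho> t * (F t - F s) + (t - s) * ((\<rho> t - \<rho> s) / (t - s) * F s)"
      using ts by (simp add: field_simps)
    have rt: "\<rho> t > 0" by (rule rpos)
    have u1: "\<rho> t * (F t - F s) \<le> \<rho> t * ((c + e) * (t - s))"
      using Fb rt by (intro mult_left_mono) auto
    have u2: "- (\<rho> t * ((c + e) * (t - s))) \<le> \<rho> t * (F t - F s)"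
      using Fb rt by (simp add: abs_le_iff) (metis minus_diff_eq mult_left_mono less_le mult_minus_right neg_le_iff_le)
    have m1: "(t - s) * (\<rho>' * F s - \<rho> s * c - \<eta>) \<le> (t - s) * ((\<rho> t - \<rho> s) / (t - s) * F s - \<rho> t * (c + e))"
      using B(1) ts by (intro mult_left_mono) auto
    have m2: "(t - s) * ((\<rho> t - \<rho> s) / (t - s) * F s + \<rho> t * (c + e)) \<le> (t - s) * (\<rho>' * F s + \<rho> s * c + \<eta>)"
      using B(2) ts by (intro mult_left_mono) auto
    show "(t - s) * (\<rho>' * F s - \<rho> s * c - \<eta>) \<le> \<rho> t * F t - \<rho> s * F s"
      using m1 u2 unfolding id by (simp add: algebra_simps)
    show "\<rho> t * F t - \<rho> s * F s \<le> (t - s) * (\<rho>' * F s + \<rho> s * c + \<eta>)"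
      using m2 u1 unfolding id by (simp add: algebra_simps)
  qed
qed

lemma gronwall_dini:
  fixes F k :: "real \<Rightarrow> real"
  assumes ab: "a \<le> b" and Fc: "continuous_on {a..b} F" and kc: "continuous_on {a..b} k"
    and loc: "\<And>s \<eta>. s \<in> {a..<b} \<Longrightarrow> \<eta> > 0 \<Longrightarrow>
      \<exists>\<delta>>0. \<forall>t. s < t \<and> t < s + \<delta> \<and> t \<le> b \<longrightarrow> \<bar>F t - F s\<bar> \<le> (k s * F s + \<eta>) * (t - s)"
  shows "F a \<le> exp (LBINT u=a..b. k u) * F b \<and> F b \<le> exp (LBINT u=a..b. k u) * F a"
proof -
  define K where "K t = (LBINT u=a..t. k u)" for t
  have Kd: "(K has_real_derivative k s) (at s within {a..b})" if "s \<in> {a..b}" for s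
    using interval_integral_FTC2[OF order_refl ab kc, of s] that
    unfolding K_def has_real_derivative_iff_has_vector_derivative by auto
  have Kc: "continuous_on {a..b} K"
    using Kd DERIV_continuous continuous_on_eq_continuous_within by blast
  have Ka: "K a = 0" by (simp add: K_def)
  have sub: "{s<..b} \<subseteq> {a..b}" if "s \<in> {a..<b}" for s using that by auto
  define G where "G t = exp (K t) * F t" for t
  define H where "H t = - (exp (- K t) * F t)" for t
  have "G a \<le> G b"
  proof (rule cont_induct_mono[OF ab])
    show "continuous_on {a..b} G" unfolding G_def by (intro continuous_intros Kc Fc)
    fix s \<eta> :: real assume s: "s \<in> {a..<b}" and eta: "\<eta> > 0"
    have d: "((\<lambda>t. exp (K t)) has_real_derivative exp (K s) * k s) (at s within {s<..b})"
      by (rule has_field_derivative_subset[OF _ sub[OF s]])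
        (use Kd[of s] s in \<open>auto intro!: derivative_eq_intros\<close>)
    from local_mult[OF eta _ d, of F "k s * F s"] loc[OF s]
    show "\<exists>\<delta>>0. \<forall>t. s < t \<and> t < s + \<delta> \<and> t \<le> b \<longrightarrow> G s - \<eta> * (t - s) \<le> G t"
      unfolding G_def by (auto simp: algebra_simps)
  qed
  moreover have "H a \<le> H b"
  proof (rule cont_induct_mono[OF ab])
    show "continuous_on {a..b} H" unfolding H_def by (intro continuous_intros Kc Fc)
    fix s \<eta> :: real assume s: "s \<in> {a..<b}" and eta: "\<eta> > 0"
    have d: "((\<lambda>t. exp (- K t)) has_real_derivative - exp (- K s) * k s) (at s within {s<..b})"
      by (rule has_field_derivative_subset[OF _ sub[OF s]])
        (use Kd[of s] s in \<open>auto intro!: derivative_eq_intros\<close>)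
    from local_mult[OF eta _ d, of F "k s * F s"] loc[OF s]
    show "\<exists>\<delta>>0. \<forall>t. s < t \<and> t < s + \<delta> \<and> t \<le> b \<longrightarrow> H s - \<eta> * (t - s) \<le> H t"
      unfolding H_def by (auto simp: algebra_simps)
  qed
  ultimately have 1: "F a \<le> exp (K b) * F b" and 2: "exp (- K b) * F b \<le> F a"
    by (simp_all add: G_def H_def Ka)
  from 2 have "exp (K b) * (exp (- K b) * F b) \<le> exp (K b) * F a" by simp
  hence "F b \<le> exp (K b) * F a" by (simp add: exp_minus field_simps)
  with 1 show ?thesis by (simp add: K_def)
qed

lemma alg_bound:
  fixes p f w \<epsilon> \<alpha> C M v r :: real
  assumes "\<alpha> > 0" "\<epsilon> > 0" "w \<ge> \<alpha>\<^sup>2" "C \<ge> 0" "\<bar>v\<bar> \<le> M" "\<bar>r\<bar> \<le> p * f" "p \<ge> 0" "f \<ge> 0"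
  shows "4 * w * \<bar>r\<bar> + \<bar>v\<bar> * p\<^sup>2 + 2 * C * p * f
     \<le> (2 * sqrt w / \<epsilon> + M / \<alpha>\<^sup>2 + C / (\<epsilon> * \<alpha>)) * (\<epsilon>\<^sup>2 * f\<^sup>2 + w * p\<^sup>2)"
proof -
  have "\<alpha>\<^sup>2 > 0" using assms(1) by simp
  hence w0: "w > 0" using assms(3) by linarith
  define \<sigma> where "\<sigma> = sqrt w"
  have sg: "\<sigma> > 0" "\<sigma>\<^sup>2 = w" using w0 by (auto simp: \<sigma>_def)
  have M0: "M \<ge> 0" using assms(5) by simp
  have a: "4 * w * \<bar>r\<bar> \<le> 2 * \<sigma> / \<epsilon> * (\<epsilon>\<^sup>2 * f\<^sup>2 + w * p\<^sup>2)"
  proof -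
    have "4 * w * \<bar>r\<bar> \<le> 4 * w * (p * f)" using assms(6) w0 by simp
    also have "\<dots> \<le> 2 * \<sigma> / \<epsilon> * (\<epsilon>\<^sup>2 * f\<^sup>2 + w * p\<^sup>2)"
    proof -
      have "0 \<le> 2 * \<sigma> / \<epsilon> * (\<epsilon> * f - \<sigma> * p)\<^sup>2" using sg assms(2) by simp
      also have "\<dots> = 2 * \<sigma> / \<epsilon> * (\<epsilon>\<^sup>2 * f\<^sup>2 + w * p\<^sup>2) - 4 * w * (p * f)"
        using assms(2) sg(2)[symmetric] by (simp add: field_simps power2_eq_square)
      finally show ?thesis by simp
    qed
    finally show ?thesis .
  qed
  have b: "\<bar>v\<bar> * p\<^sup>2 \<le> M / \<alpha>\<^sup>2 * (\<epsilon>\<^sup>2 * f\<^sup>2 + w * p\<^sup>2)"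
  proof -
    have "\<bar>v\<bar> * p\<^sup>2 \<le> M * p\<^sup>2" using assms(5) by (simp add: mult_right_mono)
    also have "\<dots> \<le> M / \<alpha>\<^sup>2 * (w * p\<^sup>2)"
    proof -
      have "M * p\<^sup>2 = M / \<alpha>\<^sup>2 * (\<alpha>\<^sup>2 * p\<^sup>2)" using assms(1) by simp
      also have "\<dots> \<le> M / \<alpha>\<^sup>2 * (w * p\<^sup>2)" using assms(3) M0
        by (intro mult_left_mono mult_right_mono) auto
      finally show ?thesis .
    qed
    also have "\<dots> \<le> M / \<alpha>\<^sup>2 * (\<epsilon>\<^sup>2 * f\<^sup>2 + w * p\<^sup>2)" using M0 by (intro mult_left_mono) auto
    finally show ?thesis .
  qed
  have c: "2 * C * p * f \<le> C / (\<epsilon> * \<alpha>) * (\<epsilon>\<^sup>2 * f\<^sup>2 + w * p\<^sup>2)"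
  proof -
    have "0 \<le> C / (\<epsilon> * \<alpha>) * (\<epsilon> * f - \<alpha> * p)\<^sup>2" using assms by simp
    also have "\<dots> = C / (\<epsilon> * \<alpha>) * (\<epsilon>\<^sup>2 * f\<^sup>2 + \<alpha>\<^sup>2 * p\<^sup>2) - 2 * C * p * f"
      using assms(1,2) by (simp add: field_simps power2_eq_square)
    finally have "2 * C * p * f \<le> C / (\<epsilon> * \<alpha>) * (\<epsilon>\<^sup>2 * f\<^sup>2 + \<alpha>\<^sup>2 * p\<^sup>2)" by simp
    also have "\<dots> \<le> C / (\<epsilon> * \<alpha>) * (\<epsilon>\<^sup>2 * f\<^sup>2 + w * p\<^sup>2)" using assms
      by (intro mult_left_mono add_left_mono mult_right_mono) auto
    finally show ?thesis .
  qed
  show ?thesis using a b c unfolding \<sigma>_def by (simp add: algebra_simps)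
qed

lemma cmod_add_sq: "(cmod (x + y))\<^sup>2 = (cmod y)\<^sup>2 + 2 * Re (y * cnj x) + (cmod x)\<^sup>2"
  unfolding cmod_power2 by (simp add: power2_eq_square algebra_simps)

lemma abs_Re_mult_cnj: "\<bar>Re (y * cnj x)\<bar> \<le> cmod y * cmod x"
  by (metis abs_Re_le_cmod complex_mod_cnj norm_mult)

lemma local_est:
  fixes \<psi> \<phi> :: "real \<Rightarrow> complex" and W V' :: "real \<Rightarrow> real"
  assumes eps: "\<epsilon> > 0" and alpha: "\<alpha> > 0" and C0: "C \<ge> 0"
    and a0: "0 \<le> a" and bL: "b \<le> L"
    and \<psi>d: "\<And>t. t \<in> {0..L} \<Longrightarrow> (\<psi> has_vector_derivative \<phi> t) (at t within {0..L})"
    and Wd: "\<And>t. t \<in> {0..L} \<Longrightarrow> (W has_real_derivative V' t) (at t within {0..L})"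
    and \<phi>c: "continuous_on {0..L} \<phi>"
    and VM: "\<And>t. t \<in> {0..L} \<Longrightarrow> \<bar>V' t\<bar> \<le> M"
    and Wa: "\<And>t. t \<in> {a..b} \<Longrightarrow> W t \<ge> \<alpha>\<^sup>2"
    and hQ: "\<And>s t. 0 \<le> s \<Longrightarrow> s \<le> t \<Longrightarrow> t \<le> L \<Longrightarrow> \<exists>Q.
        complex_of_real (\<epsilon>\<^sup>2) * (\<phi> t - \<phi> s) = integral {s..t} (\<lambda>u. complex_of_real (W u) * \<psi> u) + Q \<and>
        (\<forall>B. (\<forall>u\<in>{s..t}. C * cmod (\<psi> u) \<le> B) \<longrightarrow> cmod Q \<le> B * (t - s))"
    and s: "s \<in> {a..<b}" and eta: "\<eta> > 0"
  shows "\<exists>\<delta>>0. \<forall>t. s < t \<and> t < s + \<delta> \<and> t \<le> b \<longrightarrow>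
    \<bar>(\<epsilon>\<^sup>2 * (cmod (\<phi> t))\<^sup>2 + W t * (cmod (\<psi> t))\<^sup>2) - (\<epsilon>\<^sup>2 * (cmod (\<phi> s))\<^sup>2 + W s * (cmod (\<psi> s))\<^sup>2)\<bar>
    \<le> ((2 * sqrt (W s) / \<epsilon> + M / \<alpha>\<^sup>2 + C / (\<epsilon> * \<alpha>)) * (\<epsilon>\<^sup>2 * (cmod (\<phi> s))\<^sup>2 + W s * (cmod (\<psi> s))\<^sup>2) + \<eta>) * (t - s)"
proof -
  have sL: "s \<in> {0..L}" using s a0 bL by auto
  have \<psi>c: "continuous_on {0..L} \<psi>"
    using \<psi>d has_vector_derivative_continuous continuous_on_eq_continuous_within by blast
  have Wc: "continuous_on {0..L} W"
    using Wd DERIV_continuous continuous_on_eq_continuous_within by blast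
  have W\<psi>c: "continuous_on {0..L} (\<lambda>u. complex_of_real (W u) * \<psi> u)"
    by (intro continuous_intros Wc \<psi>c)
  define P where "P = \<psi> s"
  define \<Phi> where "\<Phi> = \<phi> s"
  define w where "w = W s"
  define r where "r = Re P * Re \<Phi> + Im P * Im \<Phi>"
  define D2 where "D2 = V' s * (cmod P)\<^sup>2 + w * (2 * r)"
  define g where "g t = W t * (cmod (\<psi> t))\<^sup>2" for t
  have gd: "(g has_real_derivative D2) (at s within {0..L})"
  proof -
    have "((\<lambda>t. Re (\<psi> t)) has_real_derivative Re \<Phi>) (at s within {0..L})"
         "((\<lambda>t. Im (\<psi> t)) has_real_derivative Im \<Phi>) (at s within {0..L})"
      using \<psi>d[OF sL] by (auto simp: has_vector_derivative_complex_iff \<Phi>_def)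
    note d = this Wd[OF sL]
    have g_alt: "g = (\<lambda>t. W t * ((Re (\<psi> t))\<^sup>2 + (Im (\<psi> t))\<^sup>2))"
      by (auto simp: g_def cmod_power2)
    show ?thesis unfolding g_alt
      by (rule derivative_eq_intros d refl | simp)+
        (simp add: D2_def r_def cmod_power2 P_def w_def algebra_simps)
  qed
  define K where "K = \<bar>w\<bar> * cmod P + 1 + C * (cmod P + 1) + 2 * C * cmod \<Phi> + 2 * cmod \<Phi> + 1"
  have K0: "K > 0" unfolding K_def using C0 by (simp add: add_pos_nonneg)
  define \<eta>1 where "\<eta>1 = min 1 (\<eta> / K)"
  have e1: "\<eta>1 > 0" "\<eta>1 \<le> 1" "\<eta>1 * K \<le> \<eta>" using eta K0
    by (auto simp: \<eta>1_def min_def field_simps)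
  obtain da where da: "da > 0" "\<forall>u\<in>{0..L}. dist u s < da \<longrightarrow> dist (\<psi> u) P < \<eta>1"
    using \<psi>c sL e1(1) unfolding continuous_on_iff P_def by blast
  obtain db where db: "db > 0" "\<forall>u\<in>{0..L}. dist u s < db \<longrightarrow>
      dist (complex_of_real (W u) * \<psi> u) (complex_of_real w * P) < \<eta>1"
    using W\<psi>c sL e1(1) unfolding continuous_on_iff P_def w_def by blast
  obtain dc where dc: "dc > 0" "\<forall>u\<in>{0..L}. dist u s < dc \<longrightarrow> dist (\<phi> u) \<Phi> < \<eta>1"
    using \<phi>c sL e1(1) unfolding continuous_on_iff \<Phi>_def by blast
  obtain dd where dd: "dd > 0" "\<forall>u\<in>{0..L}. norm (u - s) < dd \<longrightarrow>
      norm (g u - g s - (u - s) * D2) \<le> \<eta>1 * norm (u - s)"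
    using gd e1(1) unfolding has_field_derivative_def has_derivative_within_alt
    by (metis mult.commute)
  define \<delta> where "\<delta> = min (min da db) (min dc dd)"
  show ?thesis
  proof (intro exI[of _ \<delta>] conjI allI impI)
    show "\<delta> > 0" using da db dc dd by (simp add: \<delta>_def)
    fix t assume t: "s < t \<and> t < s + \<delta> \<and> t \<le> b"
    have ts: "t - s > 0" using t by simp
    have tL: "t \<in> {0..L}" using t sL bL by auto
    have near: "u \<in> {0..L} \<and> dist u s < da \<and> dist u s < db \<and> dist u s < dc \<and> norm (u - s) < dd"
      if "u \<in> {s..t}" for u
      using that t sL tL by (auto simp: dist_real_def \<delta>_def)
    obtain Q where Q: "complex_of_real (\<epsilon>\<^sup>2) * (\<phi> t - \<phi> s) = integral {s..t} (\<lambda>u. complex_of_real (W u) * \<psi> u) + Q"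
      "\<forall>B. (\<forall>u\<in>{s..t}. C * cmod (\<psi> u) \<le> B) \<longrightarrow> cmod Q \<le> B * (t - s)"
      using hQ[of s t] sL tL t by auto
    have Qb: "cmod Q \<le> C * (cmod P + \<eta>1) * (t - s)"
    proof -
      have "\<forall>u\<in>{s..t}. C * cmod (\<psi> u) \<le> C * (cmod P + \<eta>1)"
      proof
        fix u assume that: "u \<in> {s..t}"
        have "dist (\<psi> u) P < \<eta>1" using da near[OF that] by blast
        hence "cmod (\<psi> u) \<le> cmod P + \<eta>1"
          by (metis dist_norm add.commute less_imp_le norm_triangle_ineq2 add_le_cancel_left diff_le_eq order.trans)
        thus "C * cmod (\<psi> u) \<le> C * (cmod P + \<eta>1)" using C0 by (simp add: mult_left_mono)
      qed
      thus ?thesis using Q(2) by blast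
    qed
    define R1 where "R1 = integral {s..t} (\<lambda>u. complex_of_real (W u) * \<psi> u - complex_of_real w * P)"
    have R1eq: "integral {s..t} (\<lambda>u. complex_of_real (W u) * \<psi> u) = complex_of_real (t - s) * (complex_of_real w * P) + R1"
    proof -
      have int: "(\<lambda>u. complex_of_real (W u) * \<psi> u) integrable_on {s..t}"
        by (rule integrable_continuous_interval) (rule continuous_on_subset[OF W\<psi>c], use sL tL in auto)
      show ?thesis unfolding R1_def
        by (subst integral_diff[OF int integrable_const_ivl]) (use ts in \<open>simp add: scaleR_conv_of_real\<close>)
    qed
    have R1b: "cmod R1 \<le> \<eta>1 * (t - s)"
      unfolding R1_def
    proof (rule integral_bound)
      show "s \<le> t" using ts by simp
      show "continuous_on {s..t} (\<lambda>u. complex_of_real (W u) * \<psi> u - complex_of_real w * P)"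
        by (intro continuous_intros continuous_on_subset[OF W\<psi>c]) (use sL tL in auto)
      fix u assume u: "u \<in> {s..t}"
      have "dist (complex_of_real (W u) * \<psi> u) (complex_of_real w * P) < \<eta>1"
        using db(2) near[OF u] by blast
      thus "cmod (complex_of_real (W u) * \<psi> u - complex_of_real w * P) \<le> \<eta>1"
        by (simp add: dist_norm)
    qed
    define A where "A = \<phi> t - \<Phi>"
    have tst: "t \<in> {s..t}" using ts by simp
    have "dist (\<phi> t) \<Phi> < \<eta>1" using dc(2) near[OF tst] by blast
    hence Ab: "cmod A \<le> \<eta>1" by (simp add: A_def dist_norm)
    have epsA: "complex_of_real (\<epsilon>\<^sup>2) * A = complex_of_real (t - s) * (complex_of_real w * P) + R1 + Q"
      using Q(1) R1eq by (simp add: A_def \<Phi>_def)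
    have epsAb: "\<epsilon>\<^sup>2 * cmod A \<le> (t - s) * (\<bar>w\<bar> * cmod P + \<eta>1 + C * (cmod P + \<eta>1))"
    proof -
      have "\<epsilon>\<^sup>2 * cmod A = cmod (complex_of_real (\<epsilon>\<^sup>2) * A)"
        by (simp only: norm_mult norm_of_real abs_of_nonneg[OF zero_le_power2])
      also have "\<dots> \<le> cmod (complex_of_real (t - s) * (complex_of_real w * P)) + cmod R1 + cmod Q"
        unfolding epsA by (meson norm_triangle_le norm_triangle_ineq add_mono order_refl)
      also have "cmod (complex_of_real (t - s) * (complex_of_real w * P)) = (t - s) * (\<bar>w\<bar> * cmod P)"
        using ts by (simp only: norm_mult norm_of_real abs_of_pos)
      finally show ?thesis using R1b Qb by (simp add: algebra_simps)
    qed
    define e2 where "e2 = g t - g s - (t - s) * D2"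
    have e2b: "\<bar>e2\<bar> \<le> \<eta>1 * (t - s)"
      using dd(2) near[OF tst] ts unfolding e2_def by (metis real_norm_def abs_of_pos)
    have ReP: "Re (P * cnj \<Phi>) = r" by (simp add: r_def)
    have main_eq: "(\<epsilon>\<^sup>2 * (cmod (\<phi> t))\<^sup>2 + W t * (cmod (\<psi> t))\<^sup>2) - (\<epsilon>\<^sup>2 * (cmod \<Phi>)\<^sup>2 + w * (cmod P)\<^sup>2)
       = (t - s) * (4 * w * r + V' s * (cmod P)\<^sup>2)
         + (\<epsilon>\<^sup>2 * (cmod A)\<^sup>2 + 2 * Re (R1 * cnj \<Phi>) + 2 * Re (Q * cnj \<Phi>) + e2)"
    proof -
      have phit: "\<phi> t = \<Phi> + A" by (simp add: A_def)
      have "\<epsilon>\<^sup>2 * (cmod (\<phi> t))\<^sup>2 = \<epsilon>\<^sup>2 * (cmod A)\<^sup>2 + 2 * Re ((complex_of_real (\<epsilon>\<^sup>2) * A) * cnj \<Phi>) + \<epsilon>\<^sup>2 * (cmod \<Phi>)\<^sup>2"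
        unfolding phit cmod_add_sq by (simp add: algebra_simps)
      also have "Re ((complex_of_real (\<epsilon>\<^sup>2) * A) * cnj \<Phi>) = (t - s) * w * r + Re (R1 * cnj \<Phi>) + Re (Q * cnj \<Phi>)"
        unfolding epsA by (simp add: algebra_simps ReP[symmetric])
      finally have 1: "\<epsilon>\<^sup>2 * (cmod (\<phi> t))\<^sup>2 = \<epsilon>\<^sup>2 * (cmod A)\<^sup>2 + 2 * ((t - s) * w * r + Re (R1 * cnj \<Phi>) + Re (Q * cnj \<Phi>)) + \<epsilon>\<^sup>2 * (cmod \<Phi>)\<^sup>2" .
      have 2: "W t * (cmod (\<psi> t))\<^sup>2 = w * (cmod P)\<^sup>2 + (t - s) * D2 + e2"
        by (simp add: e2_def g_def w_def P_def)
      show ?thesis unfolding 1 2 D2_def by (simp add: algebra_simps)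
    qed
    have b1: "\<epsilon>\<^sup>2 * (cmod A)\<^sup>2 \<le> \<eta>1 * ((t - s) * (\<bar>w\<bar> * cmod P + \<eta>1 + C * (cmod P + \<eta>1)))"
    proof -
      have "\<epsilon>\<^sup>2 * (cmod A)\<^sup>2 = cmod A * (\<epsilon>\<^sup>2 * cmod A)" by (simp add: power2_eq_square)
      also have "\<dots> \<le> \<eta>1 * ((t - s) * (\<bar>w\<bar> * cmod P + \<eta>1 + C * (cmod P + \<eta>1)))"
        by (rule mult_mono[OF Ab epsAb]) (use e1 in auto)
      finally show ?thesis .
    qed
    have b2: "\<bar>2 * Re (R1 * cnj \<Phi>)\<bar> \<le> 2 * (\<eta>1 * (t - s)) * cmod \<Phi>"
    proof -
      have "cmod R1 * cmod \<Phi> \<le> \<eta>1 * (t - s) * cmod \<Phi>" using R1b by (rule mult_right_mono) simp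
      thus ?thesis using abs_Re_mult_cnj[of R1 \<Phi>] by linarith
    qed
    have b3: "\<bar>2 * Re (Q * cnj \<Phi>)\<bar> \<le> 2 * (C * (cmod P + \<eta>1) * (t - s)) * cmod \<Phi>"
    proof -
      have "cmod Q * cmod \<Phi> \<le> C * (cmod P + \<eta>1) * (t - s) * cmod \<Phi>" using Qb by (rule mult_right_mono) simp
      thus ?thesis using abs_Re_mult_cnj[of Q \<Phi>] by linarith
    qed
    have rest: "\<bar>\<epsilon>\<^sup>2 * (cmod A)\<^sup>2 + 2 * Re (R1 * cnj \<Phi>) + 2 * Re (Q * cnj \<Phi>) + e2\<bar>
        \<le> (t - s) * (2 * C * cmod P * cmod \<Phi>) + (t - s) * \<eta>"
    proof -
      have "\<bar>\<epsilon>\<^sup>2 * (cmod A)\<^sup>2 + 2 * Re (R1 * cnj \<Phi>) + 2 * Re (Q * cnj \<Phi>) + e2\<bar>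
          \<le> \<eta>1 * ((t - s) * (\<bar>w\<bar> * cmod P + \<eta>1 + C * (cmod P + \<eta>1)))
            + 2 * (\<eta>1 * (t - s)) * cmod \<Phi> + 2 * (C * (cmod P + \<eta>1) * (t - s)) * cmod \<Phi> + \<eta>1 * (t - s)"
        using b1 b2 b3 e2b zero_le_power2[of "cmod A"] mult_nonneg_nonneg[OF zero_le_power2[of \<epsilon>] zero_le_power2[of "cmod A"]]
        unfolding abs_le_iff by linarith
      also have "\<dots> = (t - s) * (2 * C * cmod P * cmod \<Phi>)
           + (t - s) * (\<eta>1 * (\<bar>w\<bar> * cmod P + \<eta>1 + C * (cmod P + \<eta>1) + 2 * cmod \<Phi> + 2 * C * cmod \<Phi> + 1))"
        by (simp add: algebra_simps)
      also have "\<dots> \<le> (t - s) * (2 * C * cmod P * cmod \<Phi>) + (t - s) * \<eta>"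
      proof -
        have "\<bar>w\<bar> * cmod P + \<eta>1 + C * (cmod P + \<eta>1) + 2 * cmod \<Phi> + 2 * C * cmod \<Phi> + 1 \<le> K"
        proof -
          have "C * (cmod P + \<eta>1) \<le> C * (cmod P + 1)" using e1 C0 by (simp add: mult_left_mono)
          thus ?thesis unfolding K_def using e1 by linarith
        qed
        hence "\<eta>1 * (\<bar>w\<bar> * cmod P + \<eta>1 + C * (cmod P + \<eta>1) + 2 * cmod \<Phi> + 2 * C * cmod \<Phi> + 1) \<le> \<eta>1 * K"
          using e1 by (simp add: mult_left_mono)
        also have "\<dots> \<le> \<eta>" by (rule e1(3))
        finally show ?thesis using ts by (simp add: mult_left_mono)
      qed
      finally show ?thesis .
    qed
    have sab: "s \<in> {a..b}" using s by auto
    have alg: "4 * w * \<bar>r\<bar> + \<bar>V' s\<bar> * (cmod P)\<^sup>2 + 2 * C * cmod P * cmod \<Phi>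
       \<le> (2 * sqrt w / \<epsilon> + M / \<alpha>\<^sup>2 + C / (\<epsilon> * \<alpha>)) * (\<epsilon>\<^sup>2 * (cmod \<Phi>)\<^sup>2 + w * (cmod P)\<^sup>2)"
    proof (rule alg_bound[OF alpha eps _ C0 VM[OF sL]])
      show "\<alpha>\<^sup>2 \<le> w" using Wa[OF sab] by (simp add: w_def)
      show "\<bar>r\<bar> \<le> cmod P * cmod \<Phi>" using abs_Re_mult_cnj[of P \<Phi>] ReP by simp
    qed auto
    have w0: "w \<ge> 0" using Wa[OF sab] zero_le_power2[of \<alpha>] unfolding w_def by linarith
    have "\<bar>4 * w * r + V' s * (cmod P)\<^sup>2\<bar> \<le> \<bar>4 * w * r\<bar> + \<bar>V' s * (cmod P)\<^sup>2\<bar>"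
      by (rule abs_triangle_ineq)
    also have "\<dots> = 4 * w * \<bar>r\<bar> + \<bar>V' s\<bar> * (cmod P)\<^sup>2" using w0 by (simp add: abs_mult)
    finally have X: "\<bar>4 * w * r + V' s * (cmod P)\<^sup>2\<bar> \<le> 4 * w * \<bar>r\<bar> + \<bar>V' s\<bar> * (cmod P)\<^sup>2" .
    have Y: "\<bar>(t - s) * (4 * w * r + V' s * (cmod P)\<^sup>2)\<bar> \<le> (t - s) * (4 * w * \<bar>r\<bar> + \<bar>V' s\<bar> * (cmod P)\<^sup>2)"
      unfolding abs_mult using ts X by (simp add: mult_left_mono)
    have Z: "\<bar>(t - s) * (4 * w * r + V' s * (cmod P)\<^sup>2) + (\<epsilon>\<^sup>2 * (cmod A)\<^sup>2 + 2 * Re (R1 * cnj \<Phi>) + 2 * Re (Q * cnj \<Phi>) + e2)\<bar>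
       \<le> \<bar>(t - s) * (4 * w * r + V' s * (cmod P)\<^sup>2)\<bar> + \<bar>\<epsilon>\<^sup>2 * (cmod A)\<^sup>2 + 2 * Re (R1 * cnj \<Phi>) + 2 * Re (Q * cnj \<Phi>) + e2\<bar>"
      by (rule abs_triangle_ineq)
    have "\<bar>(\<epsilon>\<^sup>2 * (cmod (\<phi> t))\<^sup>2 + W t * (cmod (\<psi> t))\<^sup>2) - (\<epsilon>\<^sup>2 * (cmod \<Phi>)\<^sup>2 + w * (cmod P)\<^sup>2)\<bar>
       \<le> (t - s) * (4 * w * \<bar>r\<bar> + \<bar>V' s\<bar> * (cmod P)\<^sup>2 + 2 * C * cmod P * cmod \<Phi>) + (t - s) * \<eta>"
      unfolding main_eq using Y Z rest by (simp add: algebra_simps)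
    also have "\<dots> \<le> (t - s) * ((2 * sqrt w / \<epsilon> + M / \<alpha>\<^sup>2 + C / (\<epsilon> * \<alpha>)) * (\<epsilon>\<^sup>2 * (cmod \<Phi>)\<^sup>2 + w * (cmod P)\<^sup>2)) + (t - s) * \<eta>"
      using alg ts by (simp add: mult_left_mono)
    finally show "\<bar>(\<epsilon>\<^sup>2 * (cmod (\<phi> t))\<^sup>2 + W t * (cmod (\<psi> t))\<^sup>2) - (\<epsilon>\<^sup>2 * (cmod (\<phi> s))\<^sup>2 + W s * (cmod (\<psi> s))\<^sup>2)\<bar>
    \<le> ((2 * sqrt (W s) / \<epsilon> + M / \<alpha>\<^sup>2 + C / (\<epsilon> * \<alpha>)) * (\<epsilon>\<^sup>2 * (cmod (\<phi> s))\<^sup>2 + W s * (cmod (\<psi> s))\<^sup>2) + \<eta>) * (t - s)"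
      by (simp add: \<Phi>_def P_def w_def algebra_simps)
  qed
qed

lemma set_integral_norm_le_const:
  fixes f :: "real \<Rightarrow> complex"
  assumes st: "s \<le> t" and fi: "set_integrable lborel {s..t} f"
    and bd: "AE u in lborel. u \<in> {s..t} \<longrightarrow> norm (f u) \<le> B"
  shows "norm (integral {s..t} f) \<le> B * (t - s)"
proof -
  have "integral {s..t} f = (LINT u:{s..t}|lborel. f u)"
    using set_borel_integral_eq_integral(2)[OF fi] by simp
  also have "norm \<dots> \<le> (LINT u:{s..t}|lborel. norm (f u))"
    by (rule set_integral_norm_bound[OF fi])
  also have "\<dots> \<le> (LINT u:{s..t}|lborel. B)"
  proof (rule set_integral_mono_AE)
    show "set_integrable lborel {s..t} (\<lambda>u. norm (f u))" using fi by (rule set_integrable_norm)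
    show "set_integrable lborel {s..t} (\<lambda>u. B)"
      by (rule borel_integrable_atLeastAtMost') (rule continuous_on_const)
    show "AE u\<in>{s..t} in lborel. norm (f u) \<le> B" using bd by simp
  qed
  also have "\<dots> = B * (t - s)"
    using st by (subst set_integral_const) (auto simp: measure_lborel_Icc)
  finally show ?thesis .
qed

theorem lemma2p5:
  fixes L \<epsilon> \<alpha> E x y :: real
    and V V' q :: "real \<Rightarrow> real"
    and \<psi> \<psi>' \<psi>'' :: "real \<Rightarrow> complex"
  assumes L_pos: "L > 0"
    and V_deriv: "\<And>t. t \<in> {0..L} \<Longrightarrow> (V has_real_derivative V' t) (at t within {0..L})"
    and V'_cont: "continuous_on {0..L} V'"
    and eps_pos: "\<epsilon> > 0"
    and q_meas: "q \<in> borel_measurable lborel"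
    and q_bdd: "\<exists>C. AE t in lborel. t \<in> {0..L} \<longrightarrow> \<bar>q t\<bar> \<le> C"
    and alpha_pos: "\<alpha> > 0"
    \<comment> \<open>\<psi> \<in> H^2(0,L) \<inter> H^1_0(0,L): C^1 representative whose derivative is absolutely
        continuous with second derivative in L^2, vanishing at the endpoints\<close>
    and psi_deriv: "\<And>t. t \<in> {0..L} \<Longrightarrow> (\<psi> has_vector_derivative \<psi>' t) (at t within {0..L})"
    and psi''_meas: "\<psi>'' \<in> borel_measurable lborel"
    and psi''_int: "set_integrable lborel {0..L} \<psi>''"
    and psi''_L2: "set_integrable lborel {0..L} (\<lambda>t. (cmod (\<psi>'' t))\<^sup>2)"
    and psi'_AC: "\<And>t. t \<in> {0..L} \<Longrightarrow> \<psi>' t = \<psi>' 0 + (LBINT s=0..t. \<psi>'' s)"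
    and psi_bc: "\<psi> 0 = 0" "\<psi> L = 0"
    and psi_norm: "(LINT t:{0..L}|lborel. (cmod (\<psi> t))\<^sup>2) = 1"
    and eq: "AE t in lborel. t \<in> {0..L} \<longrightarrow>
               - complex_of_real (\<epsilon>\<^sup>2) * \<psi>'' t + complex_of_real (V t + q t) * \<psi> t
                 = complex_of_real E * \<psi> t"
    and comp: "connected_component {z \<in> {0..L}. V z - E \<ge> \<alpha>\<^sup>2} x y"
  shows "Eplus \<epsilon> V E \<psi> \<psi>' x
           \<le> exp (2 / \<epsilon> * \<bar>LBINT s=x..y. sqrt (V s - E)\<bar>
                  + sup_norm_on L V' / \<alpha>\<^sup>2 * L
                  + Linf_norm L q / (\<alpha> * \<epsilon>) * L)
             * Eplus \<epsilon> V E \<psi> \<psi>' y"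
proof -
  define a where "a = min x y"
  define b where "b = max x y"
  have ab: "a \<le> b" by (simp add: a_def b_def)
  obtain T where T: "connected T" "T \<subseteq> {z \<in> {0..L}. V z - E \<ge> \<alpha>\<^sup>2}" "x \<in> T" "y \<in> T"
    using comp unfolding connected_component_def by blast
  have abT: "{a..b} \<subseteq> T"
    using connected_contains_Icc[OF T(1)] T(3,4) by (auto simp: a_def b_def min_def max_def)
  have a0: "0 \<le> a" and bL: "b \<le> L" using abT T(2) ab by auto
  have Wab: "\<And>t. t \<in> {a..b} \<Longrightarrow> V t - E \<ge> \<alpha>\<^sup>2" using abT T(2) by auto
  have abL: "{a..b} \<subseteq> {0..L}" using a0 bL by auto
  define Sq where "Sq = {C. 0 \<le> C \<and> (AE x in lborel. x \<in> {0..L} \<longrightarrow> \<bar>q x\<bar> \<le> C)}"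
  define C where "C = Linf_norm L q"
  have CSq: "C = Inf Sq" by (simp add: C_def Linf_norm_def Sq_def)
  obtain C1 where C1: "AE t in lborel. t \<in> {0..L} \<longrightarrow> \<bar>q t\<bar> \<le> C1" using q_bdd by blast
  have "max C1 0 \<in> Sq" unfolding Sq_def using C1 by (auto elim!: eventually_mono)
  hence Sqne: "Sq \<noteq> {}" by blast
  have C0: "C \<ge> 0" unfolding CSq by (rule cInf_greatest[OF Sqne]) (auto simp: Sq_def)
  have Cbd: "AE u in lborel. u \<in> {0..L} \<longrightarrow> \<bar>q u\<bar> \<le> C"
  proof -
    have "\<forall>n::nat. AE u in lborel. u \<in> {0..L} \<longrightarrow> \<bar>q u\<bar> \<le> C + 1 / Suc n"
    proof
      fix n :: nat
      have "Inf Sq < C + 1 / Suc n" unfolding CSq by simp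
      then obtain c where "c \<in> Sq" "c < C + 1 / Suc n" using cInf_lessD[OF Sqne] by blast
      thus "AE u in lborel. u \<in> {0..L} \<longrightarrow> \<bar>q u\<bar> \<le> C + 1 / Suc n"
        unfolding Sq_def by (auto elim!: eventually_mono)
    qed
    hence "AE u in lborel. \<forall>n::nat. u \<in> {0..L} \<longrightarrow> \<bar>q u\<bar> \<le> C + 1 / Suc n"
      by (subst AE_all_countable) (rule \<open>\<forall>n::nat. _\<close>)
    thus ?thesis
    proof (rule eventually_mono, intro impI)
      fix u assume h: "\<forall>n::nat. u \<in> {0..L} \<longrightarrow> \<bar>q u\<bar> \<le> C + 1 / Suc n" and u: "u \<in> {0..L}"
      show "\<bar>q u\<bar> \<le> C"
      proof (rule ccontr)
        assume "\<not> \<bar>q u\<bar> \<le> C"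
        then obtain n where "inverse (real (Suc n)) < \<bar>q u\<bar> - C"
          using reals_Archimedean[of "\<bar>q u\<bar> - C"] by auto
        hence "1 / Suc n < \<bar>q u\<bar> - C" by (simp add: inverse_eq_divide)
        moreover have "\<bar>q u\<bar> \<le> C + 1 / real (Suc n)" using h u by blast
        ultimately show False by linarith
      qed
    qed
  qed
  define M where "M = sup_norm_on L V'"
  have bddV': "bdd_above ((\<lambda>x. \<bar>V' x\<bar>) ` {0..L})"
  proof -
    have "compact ((\<lambda>x. \<bar>V' x\<bar>) ` {0..L})"
      by (intro compact_continuous_image continuous_intros V'_cont compact_Icc)
    thus ?thesis by (intro bounded_imp_bdd_above compact_imp_bounded)
  qed
  have VM: "\<And>t. t \<in> {0..L} \<Longrightarrow> \<bar>V' t\<bar> \<le> M"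
    unfolding M_def sup_norm_on_def using bddV' by (intro cSUP_upper) auto
  have M0: "M \<ge> 0" using VM[of 0] L_pos by (auto intro: order_trans[OF abs_ge_zero])
  have Vc: "continuous_on {0..L} V"
    using V_deriv DERIV_continuous continuous_on_eq_continuous_within by blast
  have \<psi>c: "continuous_on {0..L} \<psi>"
    using psi_deriv has_vector_derivative_continuous continuous_on_eq_continuous_within by blast
  have int_sub: "set_integrable lborel {s..t} \<psi>''" if "0 \<le> s" "t \<le> L" for s t
    by (rule set_integrable_subset[OF psi''_int]) (use that in auto)
  have \<psi>'_int: "\<psi>' t = \<psi>' 0 + integral {0..t} \<psi>''" if t: "t \<in> {0..L}" for t
  proof -
    have "(LBINT s=ereal 0..ereal t. \<psi>'' s) = integral {0..t} \<psi>''"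
      using t by (intro interval_integral_eq_integral int_sub) auto
    thus ?thesis using psi'_AC[OF t] by (simp add: zero_ereal_def)
  qed
  have \<psi>''_hk: "\<psi>'' integrable_on {0..L}" using set_borel_integral_eq_integral(1)[OF psi''_int] .
  have \<psi>'c: "continuous_on {0..L} \<psi>'"
  proof -
    have "continuous_on {0..L} (\<lambda>t. \<psi>' 0 + integral {0..t} \<psi>'')"
      by (rule continuous_on_add[OF continuous_on_const indefinite_integral_continuous_1[OF \<psi>''_hk]])
    thus ?thesis by (rule continuous_on_eq) (rule \<psi>'_int[symmetric])
  qed
  have eqbd: "AE u in lborel. u \<in> {0..L} \<longrightarrow>
      norm (complex_of_real (\<epsilon>\<^sup>2) * \<psi>'' u - complex_of_real (V u - E) * \<psi> u) \<le> C * cmod (\<psi> u)"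
    using eq Cbd
  proof eventually_elim
    case (elim u)
    show ?case
    proof
      assume u: "u \<in> {0..L}"
      have "complex_of_real (\<epsilon>\<^sup>2) * \<psi>'' u - complex_of_real (V u - E) * \<psi> u = complex_of_real (q u) * \<psi> u"
        using elim(1) u unfolding of_real_add of_real_diff by algebra
      hence "norm (complex_of_real (\<epsilon>\<^sup>2) * \<psi>'' u - complex_of_real (V u - E) * \<psi> u) = \<bar>q u\<bar> * cmod (\<psi> u)"
        by (simp add: norm_mult)
      also have "\<dots> \<le> C * cmod (\<psi> u)" using elim(2) u by (simp add: mult_right_mono)
      finally show "norm (complex_of_real (\<epsilon>\<^sup>2) * \<psi>'' u - complex_of_real (V u - E) * \<psi> u) \<le> C * cmod (\<psi> u)" .
    qed
  qed
  have hQ: "\<exists>Q. complex_of_real (\<epsilon>\<^sup>2) * (\<psi>' t - \<psi>' s) = integral {s..t} (\<lambda>u. complex_of_real (V u - E) * \<psi> u) + Q \<and>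
        (\<forall>B. (\<forall>u\<in>{s..t}. C * cmod (\<psi> u) \<le> B) \<longrightarrow> cmod Q \<le> B * (t - s))"
    if st: "0 \<le> s" "s \<le> t" "t \<le> L" for s t
  proof -
    let ?g = "\<lambda>u. complex_of_real (V u - E) * \<psi> u"
    let ?h = "\<lambda>u. complex_of_real (\<epsilon>\<^sup>2) * \<psi>'' u - ?g u"
    have gc: "continuous_on {s..t} ?g"
      by (intro continuous_intros continuous_on_subset[OF Vc] continuous_on_subset[OF \<psi>c]) (use st in auto)
    have gi: "set_integrable lborel {s..t} ?g" by (rule borel_integrable_atLeastAtMost'[OF gc])
    have hi: "set_integrable lborel {s..t} ?h"
      by (intro set_integral_diff(1) set_integrable_mult_right int_sub gi) (use st in auto)
    have d: "\<psi>' t - \<psi>' s = integral {s..t} \<psi>''"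
    proof -
      have i0t: "\<psi>'' integrable_on {0..t}" using set_borel_integral_eq_integral(1)[OF int_sub[of 0 t]] st by auto
      have "integral {0..s} \<psi>'' + integral {s..t} \<psi>'' = integral {0..t} \<psi>''"
        using Henstock_Kurzweil_Integration.integral_combine[where a=0 and c=s and b=t and f=\<psi>''] st i0t by simp
      moreover have "\<psi>' t = \<psi>' 0 + integral {0..t} \<psi>''" "\<psi>' s = \<psi>' 0 + integral {0..s} \<psi>''"
        using st by (intro \<psi>'_int; auto)+
      ultimately show ?thesis by (simp add: algebra_simps)
    qed
    have i1: "\<psi>'' integrable_on {s..t}" using set_borel_integral_eq_integral(1)[OF int_sub[of s t]] st by auto
    have i2: "?g integrable_on {s..t}" using set_borel_integral_eq_integral(1)[OF gi] .
    have "complex_of_real (\<epsilon>\<^sup>2) * (\<psi>' t - \<psi>' s) = integral {s..t} (\<lambda>u. complex_of_real (\<epsilon>\<^sup>2) * \<psi>'' u)"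
      unfolding d by (simp add: integral_mult_right)
    also have "\<dots> = integral {s..t} ?g + integral {s..t} ?h"
    proof -
      have i3: "(\<lambda>u. complex_of_real (\<epsilon>\<^sup>2) * \<psi>'' u) integrable_on {s..t}"
        by (rule integrable_on_mult_right[OF i1])
      show ?thesis using integral_diff[OF i3 i2] by simp
    qed
    finally have E1: "complex_of_real (\<epsilon>\<^sup>2) * (\<psi>' t - \<psi>' s) = integral {s..t} ?g + integral {s..t} ?h" .
    show ?thesis
    proof (intro exI conjI allI impI)
      show "complex_of_real (\<epsilon>\<^sup>2) * (\<psi>' t - \<psi>' s) = integral {s..t} ?g + integral {s..t} ?h" by (rule E1)
      fix B assume B: "\<forall>u\<in>{s..t}. C * cmod (\<psi> u) \<le> B"
      show "cmod (integral {s..t} ?h) \<le> B * (t - s)"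
      proof (rule set_integral_norm_le_const[OF st(2) hi])
        show "AE u in lborel. u \<in> {s..t} \<longrightarrow> norm (?h u) \<le> B"
          using eqbd
        proof eventually_elim
          case (elim u)
          show ?case
          proof
            assume u: "u \<in> {s..t}"
            hence "u \<in> {0..L}" using st by auto
            hence "norm (?h u) \<le> C * cmod (\<psi> u)" using elim by blast
            also have "\<dots> \<le> B" using B u by blast
            finally show "norm (?h u) \<le> B" .
          qed
        qed
      qed
    qed
  qed
  define F where "F t = \<epsilon>\<^sup>2 * (cmod (\<psi>' t))\<^sup>2 + (V t - E) * (cmod (\<psi> t))\<^sup>2" for t
  define k where "k s = 2 * sqrt (V s - E) / \<epsilon> + M / \<alpha>\<^sup>2 + C / (\<epsilon> * \<alpha>)" for s
  have Fc: "continuous_on {a..b} F" unfolding F_def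
    by (intro continuous_intros continuous_on_subset[OF \<psi>'c abL] continuous_on_subset[OF \<psi>c abL]
        continuous_on_subset[OF Vc abL])
  have sc: "continuous_on {a..b} (\<lambda>s. sqrt (V s - E))"
    by (intro continuous_intros continuous_on_subset[OF Vc abL])
  have kc: "continuous_on {a..b} k" unfolding k_def
    by (intro continuous_intros sc continuous_on_subset[OF Vc abL]) (use eps_pos in auto)
  have Wd: "\<And>t. t \<in> {0..L} \<Longrightarrow> ((\<lambda>t. V t - E) has_real_derivative V' t) (at t within {0..L})"
    using V_deriv by (auto intro!: derivative_eq_intros)
  have G: "F a \<le> exp (LBINT u=a..b. k u) * F b \<and> F b \<le> exp (LBINT u=a..b. k u) * F a"
  proof (rule gronwall_dini[OF ab Fc kc])
    fix s \<eta> :: real assume s: "s \<in> {a..<b}" and eta: "\<eta> > 0"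
    show "\<exists>\<delta>>0. \<forall>t. s < t \<and> t < s + \<delta> \<and> t \<le> b \<longrightarrow> \<bar>F t - F s\<bar> \<le> (k s * F s + \<eta>) * (t - s)"
      using local_est[OF eps_pos alpha_pos C0 a0 bL psi_deriv Wd \<psi>'c VM Wab hQ s eta]
      unfolding F_def k_def by simp
  qed
  define Is where "Is = integral {a..b} (\<lambda>s. sqrt (V s - E))"
  have Is_has: "((\<lambda>s. sqrt (V s - E)) has_integral Is) {a..b}"
    unfolding Is_def by (intro integrable_integral integrable_continuous_interval sc)
  have sq0: "0 \<le> sqrt (V x - E)" if "x \<in> {a..b}" for x
  proof -
    have "V x - E \<ge> 0" using Wab[OF that] zero_le_power2[of \<alpha>] by linarith
    thus ?thesis by simp
  qed
  have Is0: "Is \<ge> 0" unfolding Is_def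
    by (intro integral_nonneg integrable_continuous_interval sc sq0)
  have hc: "((\<lambda>s. M / \<alpha>\<^sup>2 + C / (\<epsilon> * \<alpha>)) has_integral ((b - a) * (M / \<alpha>\<^sup>2 + C / (\<epsilon> * \<alpha>)))) {a..b}"
    using has_integral_const_real[of "M / \<alpha>\<^sup>2 + C / (\<epsilon> * \<alpha>)" a b] ab by simp
  have "((\<lambda>s. sqrt (V s - E) * 2 / \<epsilon> + (M / \<alpha>\<^sup>2 + C / (\<epsilon> * \<alpha>))) has_integral
        (Is * 2 / \<epsilon> + (b - a) * (M / \<alpha>\<^sup>2 + C / (\<epsilon> * \<alpha>)))) {a..b}"
    by (rule has_integral_add[OF has_integral_divide[OF has_integral_mult_left[OF Is_has]] hc])
  hence "(k has_integral (Is * 2 / \<epsilon> + (b - a) * (M / \<alpha>\<^sup>2 + C / (\<epsilon> * \<alpha>)))) {a..b}"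
    unfolding k_def by (simp add: algebra_simps)
  hence "integral {a..b} k = Is * 2 / \<epsilon> + (b - a) * (M / \<alpha>\<^sup>2 + C / (\<epsilon> * \<alpha>))"
    by (rule integral_unique)
  moreover have "(LBINT u=a..b. k u) = integral {a..b} k"
    by (rule interval_integral_eq_integral[OF ab borel_integrable_atLeastAtMost'[OF kc]])
  ultimately have Kab: "(LBINT u=a..b. k u) = 2 / \<epsilon> * Is + (b - a) * (M / \<alpha>\<^sup>2 + C / (\<epsilon> * \<alpha>))" by simp
  have absI: "\<bar>LBINT s=x..y. sqrt (V s - E)\<bar> = Is"
  proof -
    have li: "(LBINT s=a..b. sqrt (V s - E)) = Is"
      unfolding Is_def by (rule interval_integral_eq_integral[OF ab borel_integrable_atLeastAtMost'[OF sc]])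
    show ?thesis
    proof (cases "x \<le> y")
      case True thus ?thesis using li Is0 by (simp add: a_def b_def)
    next
      case False thus ?thesis using li Is0
        by (subst interval_integral_endpoints_reverse) (simp add: a_def b_def)
    qed
  qed
  have expo: "(LBINT u=a..b. k u) \<le> 2 / \<epsilon> * \<bar>LBINT s=x..y. sqrt (V s - E)\<bar>
                  + sup_norm_on L V' / \<alpha>\<^sup>2 * L + Linf_norm L q / (\<alpha> * \<epsilon>) * L"
  proof -
    have "b - a \<le> L" using a0 bL by simp
    hence "(b - a) * (M / \<alpha>\<^sup>2 + C / (\<epsilon> * \<alpha>)) \<le> L * (M / \<alpha>\<^sup>2 + C / (\<epsilon> * \<alpha>))"
      using M0 C0 eps_pos alpha_pos by (intro mult_right_mono) auto
    thus ?thesis unfolding Kab absI M_def[symmetric] C_def[symmetric] by (simp add: algebra_simps)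
  qed
  have Fnn: "F t \<ge> 0" if "t \<in> {a..b}" for t
  proof -
    have "V t - E \<ge> 0" using Wab[OF that] zero_le_power2[of \<alpha>] by linarith
    thus ?thesis unfolding F_def by simp
  qed
  have xab: "x \<in> {a..b}" and yab: "y \<in> {a..b}" by (auto simp: a_def b_def)
  have "F x \<le> exp (LBINT u=a..b. k u) * F y"
  proof (cases "x \<le> y")
    case True thus ?thesis using G by (simp add: a_def b_def)
  next
    case False thus ?thesis using G by (simp add: a_def b_def)
  qed
  also have "\<dots> \<le> exp (2 / \<epsilon> * \<bar>LBINT s=x..y. sqrt (V s - E)\<bar>
                  + sup_norm_on L V' / \<alpha>\<^sup>2 * L + Linf_norm L q / (\<alpha> * \<epsilon>) * L) * F y"
    using expo Fnn[OF yab] by (intro mult_right_mono) auto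
  finally show ?thesis unfolding F_def Eplus_def .
qed

end
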